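(* Let $n>1$ be a natural number that is not a power of $2$. Then there exists a non-regular lattice tiling of $\mathbb{R}^n$ by $n$-double-crosses.
   Context: Lee distance on $Z^n$: $\rho_L(v,w)=\sum_i|v_i-w_i|$; $S_{n,1}(v)=\{w:\rho_L(v,w)\le 1\}$; the double-sphere is $DS_{n,1}(v,w)=S_{n,1}(v)\cup S_{n,1}(w)$ for $\rho_L(v,w)=1$ (it has $4n$ points). The $n$-double-cross is the cluster of $4n$ unit cubes (cubes $c+[-\tfrac12,\tfrac12]^n$) centered at the points of a double-sphere $DS_{n,1}$. A lattice tiling of $\mathbb{R}^n$ by a cluster $C$ is a family $\{C+l;\ l\in\mathcal{L}\}$, $\mathcal{L}$ a lattice, of sets with disjoint interiors covering $\mathbb{R}^n$. Two unit cubes with centers $c,c'$ are neighbors if $|c_i-c_i'|=1$ for one index $i$ and $c_j=c_j'$ for $j\ne i$. The tiling is non-regular if two cubes from different tiles have an $(n-1)$-dimensional intersection but are not neighbors. *)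

theory Defs
  imports "HOL-Analysis.Analysis"
begin

text \<open>Points of Z^n are int^'n, points of R^n are real^'n; n = CARD('n).\<close>

definition lee_dist :: "int^'n \<Rightarrow> int^'n \<Rightarrow> int" where
  "lee_dist v w = (\<Sum>i\<in>UNIV. \<bar>v$i - w$i\<bar>)"

definition lee_sphere1 :: "int^'n \<Rightarrow> (int^'n) set" where
  "lee_sphere1 v = {w. lee_dist v w \<le> 1}"

definition double_sphere :: "int^'n \<Rightarrow> int^'n \<Rightarrow> (int^'n) set" where
  "double_sphere v w = lee_sphere1 v \<union> lee_sphere1 w"

definition to_real :: "int^'n \<Rightarrow> real^'n" where
  "to_real v = (\<chi> i. of_int (v$i))"

definition unit_cube :: "real^'n \<Rightarrow> (real^'n) set" where
  "unit_cube c = {x. \<forall>i. \<bar>x$i - c$i\<bar> \<le> 1/2}"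

definition cluster :: "(int^'n) set \<Rightarrow> (real^'n) set" where
  "cluster D = (\<Union>c\<in>D. unit_cube (to_real c))"

text \<open>A cluster is an n-double-cross if it consists of the cubes centred at
  the points of some double-sphere DS(v,w) with Lee distance of v and w equal to 1.\<close>
definition is_double_sphere :: "(int^'n) set \<Rightarrow> bool" where
  "is_double_sphere D \<longleftrightarrow> (\<exists>v w. lee_dist v w = 1 \<and> D = double_sphere v w)"

definition is_lattice :: "(real^'n) set \<Rightarrow> bool" where
  "is_lattice L \<longleftrightarrow> (\<exists>B::real^'n^'n. invertible B \<and> L = {B *v to_real k | k. True})"

definition translate :: "real^'n \<Rightarrow> (real^'n) set \<Rightarrow> (real^'n) set" where
  "translate l S = (\<lambda>x. x + l) ` S"

definition lattice_tiling :: "(real^'n) set \<Rightarrow> (real^'n) set \<Rightarrow> bool" where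
  "lattice_tiling C L \<longleftrightarrow> is_lattice L \<and>
     (\<Union>l\<in>L. translate l C) = UNIV \<and>
     (\<forall>l\<in>L. \<forall>l'\<in>L. l \<noteq> l' \<longrightarrow> interior (translate l C) \<inter> interior (translate l' C) = {})"

definition cube_neighbors :: "real^'n \<Rightarrow> real^'n \<Rightarrow> bool" where
  "cube_neighbors c c' \<longleftrightarrow> (\<exists>i. \<bar>c$i - c'$i\<bar> = 1 \<and> (\<forall>j. j \<noteq> i \<longrightarrow> c$j = c'$j))"

definition non_regular :: "(int^'n) set \<Rightarrow> (real^'n) set \<Rightarrow> bool" where
  "non_regular D L \<longleftrightarrow> (\<exists>l\<in>L. \<exists>l'\<in>L. \<exists>c\<in>D. \<exists>c'\<in>D. l \<noteq> l' \<and>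
     aff_dim (unit_cube (to_real c + l) \<inter> unit_cube (to_real c' + l')) = int CARD('n) - 1 \<and>
     \<not> cube_neighbors (to_real c + l) (to_real c' + l'))"

end

theory Submission
  imports Defs
begin

lemma interior_finite_Union_closed_empty:
  fixes F :: "(real^'n) set set"
  assumes "finite F" "\<And>S. S \<in> F \<Longrightarrow> closed S \<and> interior S = {}"
  shows "interior (\<Union>F) = {}"
  using assms
proof (induction F rule: finite_induct)
  case empty then show ?case by simp
next
  case (insert S F)
  then show ?case using interior_closed_Un_empty_interior[of S "\<Union>F"] by auto
qed

lemma closed_unit_cube: fixes c :: "real^'n" shows "closed (unit_cube c)"
proof -
  have "unit_cube c = (\<Inter>i. {x. \<bar>x$i - c$i\<bar> \<le> 1/2})"
    unfolding unit_cube_def by auto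
  moreover have "closed {x::real^'n. \<bar>x$i - c$i\<bar> \<le> 1/2}" for i
    by (intro closed_Collect_le continuous_intros)
  ultimately show ?thesis by auto
qed

lemma cube_inter_empty_interior:
  assumes "1 \<le> \<bar>p$i - q$i\<bar>"
  shows "interior (unit_cube p \<inter> unit_cube q) = {}"
proof -
  have r: "\<bar>x - p\<bar> \<le> 1/2 \<Longrightarrow> \<bar>x - q\<bar> \<le> 1/2 \<Longrightarrow> 1 \<le> \<bar>p - q\<bar> \<Longrightarrow> x = (p+q)/2" for x p q :: real
    by (auto simp: abs_le_iff abs_if split: if_splits)
  have "unit_cube p \<inter> unit_cube q \<subseteq> {x. x$i = (p$i + q$i)/2}"
  proof
    fix x assume "x \<in> unit_cube p \<inter> unit_cube q"
    then have "\<bar>x$i - p$i\<bar> \<le> 1/2" "\<bar>x$i - q$i\<bar> \<le> 1/2" unfolding unit_cube_def by auto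
    then show "x \<in> {x. x$i = (p$i + q$i)/2}" using r[of "x$i" "p$i" "q$i"] assms by simp
  qed
  then show ?thesis using interior_mono interior_standard_hyperplane by blast
qed

lemma translate_cube: "translate l (unit_cube c) = unit_cube (c + l)"
  unfolding translate_def unit_cube_def
proof (rule set_eqI, rule iffI)
  fix x assume "x \<in> (\<lambda>x. x + l) ` {x. \<forall>i. \<bar>x $ i - c $ i\<bar> \<le> 1 / 2}"
  then show "x \<in> {x. \<forall>i. \<bar>x $ i - (c + l) $ i\<bar> \<le> 1 / 2}" by auto
next
  fix x assume "x \<in> {x. \<forall>i. \<bar>x $ i - (c + l) $ i\<bar> \<le> 1 / 2}"
  then show "x \<in> (\<lambda>x. x + l) ` {x. \<forall>i. \<bar>x $ i - c $ i\<bar> \<le> 1 / 2}"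
    by (intro image_eqI[of _ _ "x - l"]) (auto simp: algebra_simps)
qed

lemma translate_cluster: "translate l (cluster D) = (\<Union>c\<in>D. unit_cube (to_real c + l))"
  unfolding cluster_def by (simp add: translate_cube[symmetric] translate_def image_UN)

lemma sum_abs_axis: "(\<Sum>i\<in>UNIV. \<bar>(axis j s :: int^'n)$i\<bar>) = \<bar>s\<bar>"
proof -
  have "(\<Sum>i\<in>UNIV. \<bar>(axis j s :: int^'n)$i\<bar>) = (\<Sum>i\<in>UNIV. if i = j then \<bar>s\<bar> else 0)"
    by (intro sum.cong) (auto simp: axis_def)
  then show ?thesis by simp
qed

lemma sum_abs_axis2:
  assumes "j \<noteq> a"
  shows "(\<Sum>i\<in>UNIV. \<bar>(axis j s + axis a t :: int^'n)$i\<bar>) = \<bar>s\<bar> + \<bar>t\<bar>"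
proof -
  have "(\<Sum>i\<in>UNIV. \<bar>(axis j s + axis a t :: int^'n)$i\<bar>) = (\<Sum>i\<in>UNIV. (if i = j then \<bar>s\<bar> else 0) + (if i = a then \<bar>t\<bar> else 0))"
    using assms by (intro sum.cong) (auto simp: axis_def)
  then show ?thesis by (simp add: sum.distrib)
qed

lemma norm1:
  fixes v :: "int^'n"
  assumes "(\<Sum>i\<in>UNIV. \<bar>v$i\<bar>) \<le> 1"
  shows "v = 0 \<or> (\<exists>j s. (s = 1 \<or> s = -1) \<and> v = axis j s)"
proof (cases "v = 0")
  case False
  then obtain j where j: "v$j \<noteq> 0" by (metis vec_eq_iff zero_index)
  have "(\<Sum>i\<in>UNIV. \<bar>v$i\<bar>) = \<bar>v$j\<bar> + (\<Sum>i\<in>UNIV-{j}. \<bar>v$i\<bar>)"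
    by (simp add: sum.remove)
  moreover have "(\<Sum>i\<in>UNIV-{j}. \<bar>v$i\<bar>) \<ge> 0" by (simp add: sum_nonneg)
  ultimately have h1: "\<bar>v$j\<bar> = 1" and h2: "(\<Sum>i\<in>UNIV-{j}. \<bar>v$i\<bar>) = 0"
    using assms j by linarith+
  have "\<forall>i\<in>UNIV-{j}. \<bar>v$i\<bar> = 0"
    using h2 by (subst (asm) sum_nonneg_eq_0_iff) auto
  then have "v = axis j (v$j)" by (auto simp: vec_eq_iff axis_def)
  moreover have "v$j = 1 \<or> v$j = -1" using h1 by arith
  ultimately show ?thesis by blast
qed simp

lemma lee_alt: "lee_dist u v = (\<Sum>i\<in>UNIV. \<bar>(u - v)$i\<bar>)"
  by (simp add: lee_dist_def)

lemma memD:
  fixes c :: "int^'n"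
  shows "c \<in> double_sphere 0 (axis a 1) \<longleftrightarrow>
    (\<exists>t::int. (t = -1 \<or> t = 0 \<or> t = 1 \<or> t = 2) \<and> c = axis a t) \<or>
    (\<exists>j s t. j \<noteq> a \<and> (s = 1 \<or> s = -1) \<and> (t = 0 \<or> t = 1) \<and> c = axis j s + axis a t)"
  (is "?L \<longleftrightarrow> ?R")
proof
  assume ?L
  then have "lee_dist 0 c \<le> 1 \<or> lee_dist (axis a 1) c \<le> 1"
    unfolding double_sphere_def lee_sphere1_def by blast
  moreover have "lee_dist 0 c = (\<Sum>i\<in>UNIV. \<bar>c$i\<bar>)" by (simp add: lee_dist_def)
  moreover have "lee_dist (axis a 1) c = (\<Sum>i\<in>UNIV. \<bar>(c - axis a 1)$i\<bar>)"
    unfolding lee_dist_def by (intro sum.cong refl) (simp add: abs_minus_commute)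
  ultimately have "(\<Sum>i\<in>UNIV. \<bar>c$i\<bar>) \<le> 1 \<or> (\<Sum>i\<in>UNIV. \<bar>(c - axis a 1)$i\<bar>) \<le> 1"
    by (simp only:)
  then consider "(\<Sum>i\<in>UNIV. \<bar>c$i\<bar>) \<le> 1" | "(\<Sum>i\<in>UNIV. \<bar>(c - axis a 1)$i\<bar>) \<le> 1"
    by blast
  then show ?R
  proof cases
    case 1
    from norm1[OF this] show ?R
    proof
      assume "c = 0"
      moreover have "axis a (0::int) = (0::int^'n)" by (simp add: axis_def vec_eq_iff)
      ultimately have "c = axis a 0" by simp
      then show ?R by blast
    next
      assume "\<exists>j s. (s = 1 \<or> s = -1) \<and> c = axis j s"
      then obtain j s where js: "s = 1 \<or> s = -1" "c = axis j s" by blast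
      show ?R
      proof (cases "j = a")
        case True then show ?thesis using js by blast
      next
        case False
        have "axis a (0::int) = (0::int^'n)" by (simp add: axis_def vec_eq_iff)
        then have "c = axis j s + axis a 0" using js by simp
        then show ?thesis using js False by blast
      qed
    qed
  next
    case 2
    from norm1[OF this] show ?R
    proof
      assume "c - axis a 1 = 0"
      then have "c = axis a 1" by simp
      then show ?R by blast
    next
      assume "\<exists>j s. (s = 1 \<or> s = -1) \<and> c - axis a 1 = axis j s"
      then obtain j s where js0: "s = 1 \<or> s = -1" "c - axis a 1 = axis j s" by blast
      have "c = (c - axis a 1) + axis a 1" by simp
      with js0 have js: "s = 1 \<or> s = -1" "c = axis j s + axis a 1" by auto
      show ?R
      proof (cases "j = a")
        case True
        then have "c = axis a (s + 1)" using js by (simp add: axis_def vec_eq_iff)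
        moreover have "s + 1 = 2 \<or> s + 1 = 0" using js by auto
        ultimately show ?thesis by blast
      next
        case False then show ?thesis using js by blast
      qed
    qed
  qed
next
  assume ?R
  then show ?L
  proof
    assume "\<exists>t::int. (t = -1 \<or> t = 0 \<or> t = 1 \<or> t = 2) \<and> c = axis a t"
    then obtain t where t: "t = -1 \<or> t = 0 \<or> t = 1 \<or> t = 2" "c = axis a t" by blast
    have "lee_dist 0 c = (\<Sum>i\<in>UNIV. \<bar>c$i\<bar>)" by (simp add: lee_dist_def)
    then have e1: "lee_dist 0 c = \<bar>t\<bar>" using t sum_abs_axis[of a t]
      by simp
    have "axis a 1 - c = axis a (1 - t)" using t by (auto simp: axis_def vec_eq_iff)
    then have e2: "lee_dist (axis a 1) c = \<bar>1 - t\<bar>" using sum_abs_axis[of a "1-t"]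
      by (simp only: lee_alt)
    have "lee_dist 0 c \<le> 1 \<or> lee_dist (axis a 1) c \<le> 1" using t(1) unfolding e1 e2 by auto
    then show ?L unfolding double_sphere_def lee_sphere1_def by blast
  next
    assume "\<exists>j s t. j \<noteq> a \<and> (s = 1 \<or> s = -1) \<and> (t = 0 \<or> t = 1) \<and> c = axis j s + axis a t"
    then obtain j s t where h: "j \<noteq> a" "s = 1 \<or> s = -1" "t = 0 \<or> t = 1" "c = axis j s + axis a t"
      by blast
    have "lee_dist 0 c = (\<Sum>i\<in>UNIV. \<bar>c$i\<bar>)" by (simp add: lee_dist_def)
    then have e1: "lee_dist 0 c = \<bar>s\<bar> + \<bar>t\<bar>" using h sum_abs_axis2[of j a s t]
      by simp
    have "axis a 1 - c = axis j (-s) + axis a (1 - t)" using h by (auto simp: axis_def vec_eq_iff)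
    then have e2: "lee_dist (axis a 1) c = \<bar>s\<bar> + \<bar>1 - t\<bar>" using sum_abs_axis2[OF h(1), of "-s" "1-t"]
      by (simp only: lee_alt abs_minus_cancel)
    have "lee_dist 0 c \<le> 1 \<or> lee_dist (axis a 1) c \<le> 1" using h(2,3) unfolding e1 e2 by auto
    then show ?L unfolding double_sphere_def lee_sphere1_def by blast
  qed
qed


lemma arith_pair:
  fixes x y s s' N :: int
  assumes "0 < x" "x < N" "0 < y" "y < N" "s = 1 \<or> s = -1" "s' = 1 \<or> s' = -1"
    and "N dvd (y * s' - x * s)"
  shows "(x = y \<and> s = s') \<or> (x + y = N \<and> s' = -s)"
proof -
  have A: "z = 0" if "N dvd z" "-N < z" "z < N" for z
  proof (rule ccontr)
    assume "z \<noteq> 0"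
    then consider "0 < z" | "0 < -z" by linarith
    then show False
    proof cases
      case 1 then show ?thesis using zdvd_not_zless[of z N] that by auto
    next
      case 2 then show ?thesis using zdvd_not_zless[of "-z" N] that by auto
    qed
  qed
  have B: "x + y = N" if "N dvd (x + y)"
  proof -
    have "N dvd (x + y - N)" using that by (simp add: dvd_diff)
    then have "x + y - N = 0" using A[of "x + y - N"] assms(1-4) by linarith
    then show ?thesis by simp
  qed
  from assms(5,6) consider "s = 1" "s' = 1" | "s = 1" "s' = -1" | "s = -1" "s' = 1" | "s = -1" "s' = -1"
    by blast
  then show ?thesis
  proof cases
    case 1 then have "N dvd (y - x)" using assms(7) by simp
    then have "y - x = 0" using A[of "y - x"] assms(1-4) by linarith
    then show ?thesis using 1 by simp
  next
    case 2 then have "y * s' - x * s = -(x + y)" by simp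
    then have "N dvd (x + y)" using assms(7) by (metis dvd_minus_iff)
    then show ?thesis using B 2 by simp
  next
    case 3 then have "N dvd (x + y)" using assms(7) by (simp add: algebra_simps)
    then show ?thesis using B 3 by simp
  next
    case 4 then have "y * s' - x * s = -(y - x)" by simp
    then have "N dvd (y - x)" using assms(7) by (metis dvd_minus_iff)
    then have "y - x = 0" using A[of "y - x"] assms(1-4) by linarith
    then show ?thesis using 4 by simp
  qed
qed

lemma of_int_abs_lt1: "\<bar>(of_int z :: real)\<bar> < 1 \<Longrightarrow> z = 0"
  by linarith

locale dcl =
  fixes \<sigma> :: "'n::finite \<Rightarrow> nat"
  assumes bij: "bij_betw \<sigma> UNIV {..<CARD('n)}"
    and n3: "3 \<le> CARD('n)"
begin

definition sinv :: "nat \<Rightarrow> 'n" where "sinv k = inv_into UNIV \<sigma> k"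

lemma sinv1: "k < CARD('n) \<Longrightarrow> \<sigma> (sinv k) = k"
  unfolding sinv_def using bij by (simp add: bij_betw_inv_into_right)

lemma sigma_lt: "\<sigma> i < CARD('n)"
  using bij by (auto simp: bij_betw_def)

lemma sigma_inj: "\<sigma> i = \<sigma> j \<Longrightarrow> i = j"
  using bij by (auto simp: bij_betw_def inj_on_def)

definition a :: 'n where "a = sinv 0"

lemma sigma_a: "\<sigma> a = 0"
  unfolding a_def using sinv1 n3 by simp

lemma sigma_nz: "i \<noteq> a \<Longrightarrow> \<sigma> i \<noteq> 0"
  using sigma_a sigma_inj by metis

definition phi :: "int^'n \<Rightarrow> int" where "phi p = (\<Sum>i\<in>UNIV. int (\<sigma> i) * p$i)"

definition cc :: "'n \<Rightarrow> real" where
  "cc i = (if i = a then 0 else 1/2 + real (\<sigma> i) / real CARD('n))"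

definition hh :: "int^'n \<Rightarrow> real" where "hh m = (\<Sum>i\<in>UNIV. cc i * of_int (m$i))"

definition lp :: "int^'n \<Rightarrow> int \<Rightarrow> real^'n" where
  "lp m r = (\<chi> i. if i = a then hh m + 4 * of_int r else of_int (m$i))"

definition LL :: "(real^'n) set" where
  "LL = {lp m r | m r. int CARD('n) dvd phi m}"

abbreviation D0 :: "(int^'n) set" where "D0 \<equiv> double_sphere 0 (axis a 1)"

lemma phi_add: "phi (x + y) = phi x + phi y"
  unfolding phi_def by (simp add: sum.distrib algebra_simps)
lemma phi_diff: "phi (x - y) = phi x - phi y"
  unfolding phi_def by (simp add: sum_subtractf algebra_simps)
lemma phi_axis: "phi (axis j s) = int (\<sigma> j) * s"
proof -
  have "phi (axis j s) = (\<Sum>i\<in>UNIV. if i = j then int (\<sigma> j) * s else 0)"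
    unfolding phi_def by (intro sum.cong) (auto simp: axis_def)
  then show ?thesis by simp
qed
lemma hh_add: "hh (x + y) = hh x + hh y"
  unfolding hh_def by (simp add: sum.distrib algebra_simps)
lemma hh_diff: "hh (x - y) = hh x - hh y"
  unfolding hh_def by (simp add: sum_subtractf algebra_simps)
lemma hh_axis: "hh (axis j s) = cc j * of_int s"
proof -
  have "hh (axis j s) = (\<Sum>i\<in>UNIV. if i = j then cc j * of_int s else 0)"
    unfolding hh_def by (intro sum.cong) (auto simp: axis_def)
  then show ?thesis by simp
qed
lemma cc_a: "cc a = 0" by (simp add: cc_def)

lemma cc_pair: "i \<noteq> a \<Longrightarrow> j \<noteq> a \<Longrightarrow> \<sigma> i + \<sigma> j = CARD('n) \<Longrightarrow> cc i + cc j = 2"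
proof -
  assume h: "i \<noteq> a" "j \<noteq> a" "\<sigma> i + \<sigma> j = CARD('n)"
  have "real (\<sigma> i) + real (\<sigma> j) = real CARD('n)" using h(3) by (metis of_nat_add)
  then have "real (\<sigma> i) / real CARD('n) + real (\<sigma> j) / real CARD('n) = 1"
    using n3 by (simp add: add_divide_distrib[symmetric])
  then show ?thesis using h by (simp add: cc_def)
qed

lemma ax_data: "phi (axis a t) = 0" "hh (axis a t) = 0" "i \<noteq> a \<Longrightarrow> (axis a t) $ i = 0"
  "(axis a t) $ a = t"
  by (simp add: phi_axis sigma_a, simp add: hh_axis cc_a, simp_all add: axis_def)

lemma arm_data:
  assumes "j \<noteq> a"
  shows "phi (axis j s + axis a t) = int (\<sigma> j) * s" "hh (axis j s + axis a t) = cc j * of_int s"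
    "i \<noteq> a \<Longrightarrow> (axis j s + axis a t) $ i = (if i = j then s else 0)"
    "(axis j s + axis a t) $ a = t"
  using assms by (simp add: phi_add phi_axis sigma_a, simp add: hh_add hh_axis cc_a, simp_all add: axis_def)

lemma Dpair:
  assumes "c \<in> D0" "c' \<in> D0" "int CARD('n) dvd (phi c' - phi c)"
  shows "((\<forall>i. i \<noteq> a \<longrightarrow> c$i = c'$i) \<and> \<bar>c'$a - c$a\<bar> \<le> 3 \<and> hh c' = hh c) \<or>
         ((hh c' - hh c = 2 \<or> hh c' - hh c = -2) \<and> \<bar>c'$a - c$a\<bar> \<le> 1)"
proof -
  have N0: "0 < int CARD('n)" using n3 by simp
  have arm_phi: False if "j \<noteq> a" "s = 1 \<or> s = -1" "int CARD('n) dvd (int (\<sigma> j) * s)" for j s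
  proof -
    have "0 < int (\<sigma> j)" "int (\<sigma> j) < int CARD('n)" using sigma_nz[OF that(1)] sigma_lt[of j] by auto
    moreover have "int CARD('n) dvd int (\<sigma> j)" using that(2,3) by auto
    ultimately show False using zdvd_not_zless by blast
  qed
  consider (A) t where "t = -1 \<or> t = 0 \<or> t = 1 \<or> t = 2" "c = axis a t"
    | (B) j s t where "j \<noteq> a" "s = 1 \<or> s = -1" "t = 0 \<or> t = 1" "c = axis j s + axis a t"
    using assms(1)[unfolded memD] by blast
  note cases_c = this
  consider (A) t' where "t' = -1 \<or> t' = 0 \<or> t' = 1 \<or> t' = 2" "c' = axis a t'"
    | (B) j' s' t' where "j' \<noteq> a" "s' = 1 \<or> s' = -1" "t' = 0 \<or> t' = 1" "c' = axis j' s' + axis a t'"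
    using assms(2)[unfolded memD] by blast
  note cases_c' = this
  show ?thesis
  proof (cases rule: cases_c; cases rule: cases_c')
    fix t t' assume h: "t = -1 \<or> t = 0 \<or> t = 1 \<or> t = 2" "c = axis a t"
      "t' = -1 \<or> t' = 0 \<or> t' = 1 \<or> t' = 2" "c' = axis a t'"
    then show ?thesis by (auto simp: ax_data)
  next
    fix t j' s' t' assume h: "t = -1 \<or> t = 0 \<or> t = 1 \<or> t = 2" "c = axis a t"
      "j' \<noteq> a" "s' = 1 \<or> s' = -1" "t' = 0 \<or> t' = 1" "c' = axis j' s' + axis a t'"
    then have "int CARD('n) dvd (int (\<sigma> j') * s')" using assms(3) by (simp add: ax_data arm_data)
    then show ?thesis using arm_phi h by blast
  next
    fix j s t t' assume h: "j \<noteq> a" "s = 1 \<or> s = -1" "t = 0 \<or> t = 1" "c = axis j s + axis a t"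
      "t' = -1 \<or> t' = 0 \<or> t' = 1 \<or> t' = 2" "c' = axis a t'"
    then have "int CARD('n) dvd (- (int (\<sigma> j) * s))" using assms(3) by (simp add: ax_data arm_data)
    then have "int CARD('n) dvd (int (\<sigma> j) * s)" by simp
    then show ?thesis using arm_phi h by blast
  next
    fix j s t j' s' t' assume h: "j \<noteq> a" "s = 1 \<or> s = -1" "t = 0 \<or> t = 1" "c = axis j s + axis a t"
      "j' \<noteq> a" "s' = 1 \<or> s' = -1" "t' = 0 \<or> t' = 1" "c' = axis j' s' + axis a t'"
    then have dv: "int CARD('n) dvd (int (\<sigma> j') * s' - int (\<sigma> j) * s)"
      using assms(3) by (simp add: arm_data)
    have "0 < int (\<sigma> j)" "int (\<sigma> j) < int CARD('n)" using sigma_nz[OF h(1)] sigma_lt[of j] by auto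
    moreover have "0 < int (\<sigma> j')" "int (\<sigma> j') < int CARD('n)" using sigma_nz[OF h(5)] sigma_lt[of j'] by auto
    ultimately have "(int (\<sigma> j) = int (\<sigma> j') \<and> s = s') \<or> (int (\<sigma> j) + int (\<sigma> j') = int CARD('n) \<and> s' = -s)"
      using arith_pair[OF _ _ _ _ h(2) h(6) dv] by blast
    then show ?thesis
    proof
      assume "int (\<sigma> j) = int (\<sigma> j') \<and> s = s'"
      then have jj: "j = j'" "s = s'" using sigma_inj by auto
      have "\<forall>i. i \<noteq> a \<longrightarrow> c$i = c'$i" using h jj by (simp add: axis_def)
      moreover have "hh c' = hh c" using h jj by (simp add: arm_data)
      moreover have "\<bar>c'$a - c$a\<bar> \<le> 3" using h jj by (auto simp: arm_data)
      ultimately show ?thesis by blast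
    next
      assume e: "int (\<sigma> j) + int (\<sigma> j') = int CARD('n) \<and> s' = -s"
      then have "\<sigma> j + \<sigma> j' = CARD('n)" by linarith
      then have cs: "cc j + cc j' = 2" using cc_pair h(1,5) by blast
      have "hh c' - hh c = cc j' * of_int s' - cc j * of_int s" using h by (simp add: arm_data)
      also have "\<dots> = - of_int s * (cc j + cc j')" using e by (simp add: algebra_simps)
      also have "\<dots> = - 2 * of_int s" using cs by simp
      finally have "hh c' - hh c = 2 \<or> hh c' - hh c = -2" using h(2) by auto
      moreover have "c$a = t" "c'$a = t'" using arm_data(4)[OF h(1)] arm_data(4)[OF h(5)] h(4,8) by simp_all
      then have "\<bar>c'$a - c$a\<bar> \<le> 1" using h(3,7) by auto
      ultimately show ?thesis by blast
    qed
  qed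
qed

lemma lp_comp: "lp m r $ a = hh m + 4 * of_int r" "i \<noteq> a \<Longrightarrow> lp m r $ i = of_int (m$i)"
  by (simp_all add: lp_def)

lemma sep:
  assumes "c \<in> D0" "c' \<in> D0" "int CARD('n) dvd phi m" "int CARD('n) dvd phi m'"
    and "lp m r \<noteq> lp m' r'"
  shows "\<exists>i. 1 \<le> \<bar>(to_real c + lp m r)$i - (to_real c' + lp m' r')$i\<bar>"
proof (rule ccontr)
  assume "\<not> ?thesis"
  then have lt: "\<bar>(to_real c + lp m r)$i - (to_real c' + lp m' r')$i\<bar> < 1" for i
    by (simp add: not_le)
  have eqT: "m$i - m'$i = c'$i - c$i" if "i \<noteq> a" for i
  proof -
    have "\<bar>(of_int (c$i + m$i - (c'$i + m'$i)) :: real)\<bar> < 1"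
      using lt[of i] that by (simp add: to_real_def lp_comp)
    then have "c$i + m$i - (c'$i + m'$i) = 0" by (rule of_int_abs_lt1)
    then show ?thesis by simp
  qed
  have ph: "phi m - phi m' = phi c' - phi c"
  proof -
    have "phi m - phi m' = (\<Sum>i\<in>UNIV. int (\<sigma> i) * (m$i - m'$i))"
      unfolding phi_def by (simp add: sum_subtractf algebra_simps)
    also have "\<dots> = (\<Sum>i\<in>UNIV. int (\<sigma> i) * (c'$i - c$i))"
      by (intro sum.cong refl) (metis eqT mult_zero_left of_nat_0 sigma_a)
    also have "\<dots> = phi c' - phi c"
      unfolding phi_def by (simp add: sum_subtractf algebra_simps)
    finally show ?thesis .
  qed
  have hq: "hh m - hh m' = hh c' - hh c"
  proof -
    have "hh m - hh m' = (\<Sum>i\<in>UNIV. cc i * of_int (m$i - m'$i))"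
      unfolding hh_def by (simp add: sum_subtractf algebra_simps)
    also have "\<dots> = (\<Sum>i\<in>UNIV. cc i * of_int (c'$i - c$i))"
      by (intro sum.cong refl) (metis eqT mult_zero_left cc_a)
    also have "\<dots> = hh c' - hh c"
      unfolding hh_def by (simp add: sum_subtractf algebra_simps)
    finally show ?thesis .
  qed
  have dv: "int CARD('n) dvd (phi c' - phi c)" using ph assms(3,4) by (metis dvd_diff)
  have La: "(to_real c + lp m r)$a - (to_real c' + lp m' r')$a
      = of_int (c$a - c'$a + 4 * (r - r')) + (hh c' - hh c)"
    using hq by (simp add: to_real_def lp_comp algebra_simps)
  from Dpair[OF assms(1,2) dv] show False
  proof
    assume h: "(\<forall>i. i \<noteq> a \<longrightarrow> c$i = c'$i) \<and> \<bar>c'$a - c$a\<bar> \<le> 3 \<and> hh c' = hh c"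
    then have "\<bar>(of_int (c$a - c'$a + 4 * (r - r')) :: real)\<bar> < 1" using lt[of a] La by simp
    then have "c$a - c'$a + 4 * (r - r') = 0" by (rule of_int_abs_lt1)
    moreover have "\<bar>c'$a - c$a\<bar> \<le> 3" using h by blast
    ultimately have rr: "r = r'" by presburger
    have "lp m r = lp m' r'"
    proof (subst vec_eq_iff, intro allI)
      fix i show "lp m r $ i = lp m' r' $ i"
      proof (cases "i = a")
        case True then show ?thesis using hq h rr by (simp add: lp_comp)
      next
        case False then show ?thesis using eqT[OF False] h by (simp add: lp_comp)
      qed
    qed
    then show False using assms(5) by simp
  next
    assume h: "(hh c' - hh c = 2 \<or> hh c' - hh c = -2) \<and> \<bar>c'$a - c$a\<bar> \<le> 1"
    then obtain e :: int where e: "e = 2 \<or> e = -2" "hh c' - hh c = of_int e"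
    proof (elim conjE disjE)
      assume "hh c' - hh c = 2" then show ?thesis using that[of 2] by simp
    next
      assume "hh c' - hh c = -2" then show ?thesis using that[of "-2"] by simp
    qed
    then have "\<bar>(of_int (c$a - c'$a + 4 * (r - r') + e) :: real)\<bar> < 1" using lt[of a] La by simp
    then have "c$a - c'$a + 4 * (r - r') + e = 0" by (rule of_int_abs_lt1)
    moreover have "\<bar>c'$a - c$a\<bar> \<le> 1" using h by blast
    ultimately show False using e(1) by presburger
  qed
qed

end

context dcl begin

lemma cube_memI:
  assumes "\<forall>i. i \<noteq> a \<longrightarrow> c$i + m$i = p$i"
    and "\<forall>i. i \<noteq> a \<longrightarrow> \<bar>x$i - of_int (p$i)\<bar> \<le> 1/2"
    and "\<bar>x$a - (of_int (c$a) + hh m + 4 * of_int r)\<bar> \<le> 1/2"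
  shows "x \<in> unit_cube (to_real c + lp m r)"
  unfolding unit_cube_def
proof (intro CollectI allI)
  fix i show "\<bar>x $ i - (to_real c + lp m r) $ i\<bar> \<le> 1/2"
  proof (cases "i = a")
    case True then show ?thesis using assms(3) by (simp add: to_real_def lp_comp add.assoc)
  next
    case False
    then have "(to_real c + lp m r) $ i = of_int (p$i)"
      using assms(1) by (simp add: to_real_def lp_comp flip: of_int_add)
    then show ?thesis using assms(2) False by simp
  qed
qed

lemma floor4:
  fixes y :: real and b :: real
  defines "r \<equiv> \<lfloor>(y + b)/4\<rfloor>"
  shows "-b \<le> y - 4 * of_int r" "y - 4 * of_int r < 4 - b"
proof -
  have "of_int r \<le> (y + b)/4" "(y + b)/4 < of_int r + 1"
    unfolding r_def using floor_correct[of "(y+b)/4"] by auto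
  then have "4 * of_int r \<le> y + b" "y + b < 4 * of_int r + 4" by (simp_all add: field_simps)
  then show "-b \<le> y - 4 * of_int r" "y - 4 * of_int r < 4 - b" by simp_all
qed

lemma cover:
  "\<exists>c m r. c \<in> D0 \<and> int CARD('n) dvd phi m \<and> x \<in> unit_cube (to_real c + lp m r)"
proof -
  define p :: "int^'n" where "p = (\<chi> i. if i = a then 0 else \<lfloor>x$i + 1/2\<rfloor>)"
  have pr: "\<forall>i. i \<noteq> a \<longrightarrow> \<bar>x$i - of_int (p$i)\<bar> \<le> 1/2"
  proof (intro allI impI)
    fix i assume "i \<noteq> a"
    then have "p$i = \<lfloor>x$i + 1/2\<rfloor>" by (simp add: p_def)
    then show "\<bar>x$i - of_int (p$i)\<bar> \<le> 1/2" using floor_correct[of "x$i + 1/2"] by linarith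
  qed
  define N where "N = int CARD('n)"
  have N0: "0 < N" unfolding N_def using n3 by simp
  define v where "v = phi p mod N"
  have v0: "0 \<le> v" "v < N" unfolding v_def using N0 by simp_all
  have dvv: "N dvd (phi p - v)" unfolding v_def by (simp add: minus_mod_eq_mult_div[symmetric])
  show ?thesis
  proof (cases "v = 0")
    case True
    then have dvp: "int CARD('n) dvd phi p" using dvv N_def by simp
    define y where "y = x$a - hh p"
    define r where "r = \<lfloor>(y + 3/2)/4\<rfloor>"
    define z where "z = y - 4 * of_int r"
    have zb0: "- (3/2) \<le> z" "z < 4 - 3/2" unfolding z_def r_def by (rule floor4)+
    then have zb: "-3/2 \<le> z" "z < 5/2" by simp_all
    define t where "t = \<lfloor>z + 1/2\<rfloor>"
    have tb: "of_int t \<le> z + 1/2" "z + 1/2 < of_int t + 1" unfolding t_def using floor_correct[of "z + 1/2"] by auto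
    have "(-2::real) < of_int t" "(of_int t::real) < 3" using tb zb by linarith+
    then have "-2 < t" "t < 3" by simp_all
    then have tt: "t = -1 \<or> t = 0 \<or> t = 1 \<or> t = 2" by presburger
    have cD: "axis a t \<in> D0" unfolding memD using tt by blast
    have "x \<in> unit_cube (to_real (axis a t) + lp p r)"
    proof (rule cube_memI[OF _ pr])
      show "\<forall>i. i \<noteq> a \<longrightarrow> axis a t $ i + p $ i = p $ i" by (simp add: ax_data)
      show "\<bar>x $ a - (of_int (axis a t $ a) + hh p + 4 * of_int r)\<bar> \<le> 1 / 2"
        using tb unfolding ax_data z_def y_def by linarith
    qed
    then show ?thesis using cD dvp by blast
  next
    case False
    then have v1: "0 < v" using v0 by simp
    define nv where "nv = nat v"
    have nv: "int nv = v" "0 < nv" "nv < CARD('n)" unfolding nv_def using v0 v1 N_def by auto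
    define j2 where "j2 = sinv nv"
    define j1 where "j1 = sinv (CARD('n) - nv)"
    have s2: "\<sigma> j2 = nv" unfolding j2_def using sinv1 nv by simp
    have s1: "\<sigma> j1 = CARD('n) - nv" unfolding j1_def using sinv1 nv by simp
    have j2a: "j2 \<noteq> a" using s2 nv sigma_a by auto
    have j1a: "j1 \<noteq> a" using s1 nv sigma_a by auto
    define m2 where "m2 = p - axis j2 1"
    define m1 where "m1 = p + axis j1 1"
    have "phi m2 = phi p - v" unfolding m2_def using s2 nv by (simp add: phi_diff phi_axis)
    then have dv2: "int CARD('n) dvd phi m2" using dvv N_def by simp
    have "phi m1 = (phi p - v) + N" unfolding m1_def using s1 nv N_def
      by (simp add: phi_add phi_axis of_nat_diff)
    then have dv1: "int CARD('n) dvd phi m1" using dvv N_def by simp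
    have ccs: "cc j1 + cc j2 = 2" using cc_pair[OF j1a j2a] s1 s2 nv by simp
    have hm: "hh m1 = hh m2 + 2" unfolding m1_def m2_def using ccs
      by (simp add: hh_add hh_diff hh_axis algebra_simps)
    define y where "y = x$a - hh m2"
    define r where "r = \<lfloor>(y + 1/2)/4\<rfloor>"
    define z where "z = y - 4 * of_int r"
    have zb0: "- (1/2) \<le> z" "z < 4 - 1/2" unfolding z_def r_def by (rule floor4)+
    then have zb: "-1/2 \<le> z" "z < 7/2" by simp_all
    show ?thesis
    proof (cases "z \<le> 3/2")
      case True
      define t :: int where "t = (if z \<le> 1/2 then 0 else 1)"
      have tt: "t = 0 \<or> t = 1" unfolding t_def by simp
      have cD: "axis j2 1 + axis a t \<in> D0" unfolding memD using tt j2a by blast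
      have "x \<in> unit_cube (to_real (axis j2 1 + axis a t) + lp m2 r)"
      proof (rule cube_memI[OF _ pr])
        show "\<forall>i. i \<noteq> a \<longrightarrow> (axis j2 1 + axis a t) $ i + m2 $ i = p $ i"
          using j2a by (simp add: m2_def axis_def)
        have "\<bar>z - of_int t\<bar> \<le> 1/2"
        proof (cases "z \<le> 1/2")
          case True then show ?thesis using zb by (intro abs_leI) (simp_all add: t_def)
        next
          case False then show ?thesis using \<open>z \<le> 3/2\<close> by (intro abs_leI) (simp_all add: t_def)
        qed
        then show "\<bar>x $ a - (of_int ((axis j2 1 + axis a t) $ a) + hh m2 + 4 * of_int r)\<bar> \<le> 1 / 2"
          unfolding arm_data(4)[OF j2a] z_def y_def by argo
      qed
      then show ?thesis using cD dv2 by blast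
    next
      case False
      define t :: int where "t = (if z \<le> 5/2 then 0 else 1)"
      have tt: "t = 0 \<or> t = 1" unfolding t_def by simp
      have cD: "axis j1 (-1) + axis a t \<in> D0" unfolding memD using tt j1a by blast
      have "x \<in> unit_cube (to_real (axis j1 (-1) + axis a t) + lp m1 r)"
      proof (rule cube_memI[OF _ pr])
        show "\<forall>i. i \<noteq> a \<longrightarrow> (axis j1 (-1) + axis a t) $ i + m1 $ i = p $ i"
          using j1a by (simp add: m1_def axis_def)
        have "\<bar>z - 2 - of_int t\<bar> \<le> 1/2"
        proof (cases "z \<le> 5/2")
          case True then show ?thesis using \<open>\<not> z \<le> 3/2\<close> by (intro abs_leI) (simp_all add: t_def)
        next
          case False then show ?thesis using zb by (intro abs_leI) (simp_all add: t_def)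
        qed
        then show "\<bar>x $ a - (of_int ((axis j1 (-1) + axis a t) $ a) + hh m1 + 4 * of_int r)\<bar> \<le> 1 / 2"
          unfolding arm_data(4)[OF j1a] z_def y_def hm by argo
      qed
      then show ?thesis using cD dv1 by blast
    qed
  qed
qed

lemma finite_D0: "finite D0"
proof -
  have "D0 \<subseteq> (\<lambda>t. axis a t) ` {-1..2} \<union>
      (\<lambda>(j,s,t). axis j s + axis a t) ` (UNIV \<times> {-1,1} \<times> {0,1})"
  proof
    fix c assume "c \<in> D0"
    then show "c \<in> (\<lambda>t. axis a t) ` {-1..2} \<union>
      (\<lambda>(j,s,t). axis j s + axis a t) ` (UNIV \<times> {-1,1} \<times> {0,1})"
      unfolding memD by force
  qed
  then show ?thesis by (rule finite_subset) auto
qed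

lemma tiles_disjoint:
  assumes "l \<in> LL" "l' \<in> LL" "l \<noteq> l'"
  shows "interior (translate l (cluster D0)) \<inter> interior (translate l' (cluster D0)) = {}"
proof -
  obtain m r where l: "l = lp m r" "int CARD('n) dvd phi m" using assms(1) unfolding LL_def by blast
  obtain m' r' where l': "l' = lp m' r'" "int CARD('n) dvd phi m'" using assms(2) unfolding LL_def by blast
  define F where "F = (\<lambda>(c,c'). unit_cube (to_real c + l) \<inter> unit_cube (to_real c' + l')) ` (D0 \<times> D0)"
  have eq: "translate l (cluster D0) \<inter> translate l' (cluster D0) = \<Union>F"
    unfolding F_def translate_cluster by auto
  have "interior (\<Union>F) = {}"
  proof (rule interior_finite_Union_closed_empty)
    show "finite F" unfolding F_def using finite_D0 by simp
  next
    fix S assume "S \<in> F"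
    then obtain c c' where cc: "c \<in> D0" "c' \<in> D0" "S = unit_cube (to_real c + l) \<inter> unit_cube (to_real c' + l')"
      unfolding F_def by auto
    obtain i where "1 \<le> \<bar>(to_real c + lp m r)$i - (to_real c' + lp m' r')$i\<bar>"
      using sep[OF cc(1,2) l(2) l'(2)] assms(3) l(1) l'(1) by blast
    then have "interior S = {}" using cube_inter_empty_interior cc(3) l(1) l'(1) by blast
    moreover have "closed S" using cc(3) by (simp add: closed_Int closed_unit_cube)
    ultimately show "closed S \<and> interior S = {}" by blast
  qed
  then show ?thesis using eq by (simp add: interior_Int[symmetric])
qed

lemma tiles_cover: "(\<Union>l\<in>LL. translate l (cluster D0)) = UNIV"
proof -
  have "x \<in> (\<Union>l\<in>LL. translate l (cluster D0))" for x
  proof -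
    obtain c m r where h: "c \<in> D0" "int CARD('n) dvd phi m" "x \<in> unit_cube (to_real c + lp m r)"
      using cover by blast
    have "lp m r \<in> LL" unfolding LL_def using h(2) by blast
    moreover have "x \<in> translate (lp m r) (cluster D0)" unfolding translate_cluster using h by blast
    ultimately show ?thesis by blast
  qed
  then show ?thesis by blast
qed

end

lemma affdim_pair:
  fixes i b :: "'n::finite"
  assumes "i \<noteq> b"
  shows "aff_dim (unit_cube (axis i 1) \<inter> unit_cube (axis i 2 + axis b (1/2) :: real^'n)) = int CARD('n) - 1"
proof -
  define S where "S = unit_cube (axis i 1) \<inter> unit_cube (axis i 2 + axis b (1/2) :: real^'n)"
  define H :: "(real^'n) set" where "H = {x. axis i 1 \<bullet> x = 3/2}"
  have H: "H = {x. x$i = 3/2}" unfolding H_def by (simp add: inner_axis')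
  have ne: "axis i (1::real) \<noteq> 0" by (simp add: axis_eq_0_iff)
  have aH: "aff_dim H = int CARD('n) - 1" unfolding H_def
    using aff_dim_hyperplane[of "axis i (1::real)" "3/2"] ne by (simp del: aff_dim_hyperplane)
  have SH: "S \<subseteq> H"
  proof
    fix x assume "x \<in> S"
    then have "\<bar>x$i - 1\<bar> \<le> 1/2" "\<bar>x$i - 2\<bar> \<le> 1/2"
      unfolding S_def unit_cube_def using assms by (auto dest!: spec[of _ i] simp: axis_def)
    then have "x$i = 3/2" by (simp add: abs_le_iff)
    then show "x \<in> H" using H by simp
  qed
  define z :: "real^'n" where "z = axis i (3/2) + axis b (1/4)"
  have HB: "H \<inter> ball z (1/4) \<subseteq> S"
  proof
    fix x assume x: "x \<in> H \<inter> ball z (1/4)"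
    have xi: "x$i = 3/2" using x H by simp
    have cl: "\<bar>x$k - z$k\<bar> < 1/4" for k
    proof -
      have "\<bar>(x - z)$k\<bar> \<le> norm (x - z)" by (rule component_le_norm_cart)
      also have "\<dots> < 1/4" using x by (simp add: dist_norm norm_minus_commute)
      finally show ?thesis by simp
    qed
    show "x \<in> S" unfolding S_def unit_cube_def
    proof (intro IntI CollectI allI)
      fix k
      have c1: "x$k - z$k < 1/4" "z$k - x$k < 1/4" using cl[of k] unfolding abs_less_iff by linarith+
      have zk: "z$k = (if k = i then 3/2 else if k = b then 1/4 else 0)" using assms by (simp add: z_def axis_def)
      show "\<bar>x $ k - axis i 1 $ k\<bar> \<le> 1/2"
        by (intro abs_leI) (use c1 zk xi assms in \<open>auto simp: axis_def split: if_splits\<close>)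
      show "\<bar>x $ k - (axis i 2 + axis b (1/2)) $ k\<bar> \<le> 1/2"
        by (intro abs_leI) (use c1 zk xi assms in \<open>auto simp: axis_def split: if_splits\<close>)
    qed
  qed
  have zH: "z \<in> H" using H assms by (simp add: z_def axis_def)
  have "aff_dim (H \<inter> ball z (1/4)) = aff_dim H"
  proof (rule aff_dim_convex_Int_open)
    show "convex H" unfolding H_def by (rule convex_hyperplane)
    show "open (ball z (1/4))" by simp
    show "H \<inter> ball z (1/4) \<noteq> {}" using zH by (metis IntI centre_in_ball empty_iff zero_less_divide_1_iff zero_less_numeral)
  qed
  then have "int CARD('n) - 1 \<le> aff_dim S" using aff_dim_subset[OF HB] aH by simp
  moreover have "aff_dim S \<le> int CARD('n) - 1" using aff_dim_subset[OF SH] aH by simp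
  ultimately show ?thesis unfolding S_def by simp
qed

lemma not_nb:
  fixes i b :: "'n::finite"
  assumes "i \<noteq> b"
  shows "\<not> cube_neighbors (axis i 1) (axis i 2 + axis b (1/2) :: real^'n)"
proof
  assume "cube_neighbors (axis i 1) (axis i 2 + axis b (1/2) :: real^'n)"
  then obtain k where k: "\<bar>(axis i 1 :: real^'n)$k - (axis i 2 + axis b (1/2))$k\<bar> = 1"
    "\<forall>j. j \<noteq> k \<longrightarrow> (axis i 1 :: real^'n)$j = (axis i 2 + axis b (1/2))$j"
    unfolding cube_neighbors_def by blast
  show False
  proof (cases "k = i")
    case True
    then show False using k(2)[rule_format, of b] assms by (simp add: axis_def)
  next
    case False
    then show False using k(2)[rule_format, of i] assms by (simp add: axis_def)
  qed
qed

context dcl begin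

definition i1 :: 'n where "i1 = sinv 1"
definition i2 :: 'n where "i2 = sinv 2"
lemma s_i1: "\<sigma> i1 = 1" unfolding i1_def using sinv1 n3 by simp
lemma s_i2: "\<sigma> i2 = 2" unfolding i2_def using sinv1 n3 by simp
lemma i1a: "i1 \<noteq> a" using s_i1 sigma_a by auto
lemma i2a: "i2 \<noteq> a" using s_i2 sigma_a by auto
lemma i12: "i1 \<noteq> i2" using s_i1 s_i2 by auto

definition gR :: "real^'n \<Rightarrow> real^'n" where
  "gR x = (\<chi> i. if i = i1 then real CARD('n) * x$i1 - (\<Sum>k\<in>UNIV-{i1}. real (\<sigma> k) * x$k) else x$i)"
definition fR :: "real^'n \<Rightarrow> real^'n" where
  "fR x = (\<chi> i. if i = a then 4 * x$a + (\<Sum>k\<in>UNIV. cc k * gR x $ k) else gR x $ i)"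
definition fI :: "real^'n \<Rightarrow> real^'n" where
  "fI y = (\<chi> i. if i = a then (y$a - (\<Sum>k\<in>UNIV. cc k * y$k)) / 4
      else if i = i1 then (y$i1 + (\<Sum>k\<in>UNIV-{i1}. real (\<sigma> k) * y$k)) / real CARD('n) else y$i)"
definition gI :: "int^'n \<Rightarrow> int^'n" where
  "gI k = (\<chi> i. if i = i1 then int CARD('n) * k$i1 - (\<Sum>j\<in>UNIV-{i1}. int (\<sigma> j) * k$j) else k$i)"

lemma gR_add: "gR (x + y) = gR x + gR y"
  unfolding gR_def by (simp add: vec_eq_iff sum.distrib algebra_simps)
lemma gR_scale: "gR (c *\<^sub>R x) = c *\<^sub>R gR x"
  unfolding gR_def by (simp add: vec_eq_iff sum_distrib_left algebra_simps)

lemma lin_fR: "linear fR"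
proof (rule linearI)
  fix x y show "fR (x + y) = fR x + fR y"
    unfolding fR_def by (simp add: vec_eq_iff gR_add sum.distrib algebra_simps)
next
  fix c x show "fR (c *\<^sub>R x) = c *\<^sub>R fR x"
    unfolding fR_def by (simp add: vec_eq_iff gR_scale sum_distrib_left algebra_simps)
qed

lemma lin_fI: "linear fI"
proof (rule linearI)
  fix x y show "fI (x + y) = fI x + fI y"
    unfolding fI_def by (simp add: vec_eq_iff sum.distrib field_simps)
next
  fix c x show "fI (c *\<^sub>R x) = c *\<^sub>R fI x"
    unfolding fI_def by (simp add: vec_eq_iff sum_distrib_left algebra_simps)
qed

lemma fI_fR: "fI (fR x) = x"
proof -
  have A: "(\<Sum>k\<in>UNIV. cc k * fR x $ k) = (\<Sum>k\<in>UNIV. cc k * gR x $ k)"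
    by (intro sum.cong refl) (simp add: fR_def cc_a)
  have B: "(\<Sum>k\<in>UNIV-{i1}. real (\<sigma> k) * fR x $ k) = (\<Sum>k\<in>UNIV-{i1}. real (\<sigma> k) * x $ k)"
    by (intro sum.cong refl) (simp add: fR_def gR_def sigma_a)
  have N0: "real CARD('n) \<noteq> 0" using n3 by simp
  show ?thesis
  proof (subst vec_eq_iff, intro allI)
    fix i show "fI (fR x) $ i = x $ i"
    proof (cases "i = a")
      case True then show ?thesis using A by (simp add: fI_def fR_def)
    next
      case False
      show ?thesis
      proof (cases "i = i1")
        case True
        then have "fI (fR x) $ i = (fR x $ i1 + (\<Sum>k\<in>UNIV-{i1}. real (\<sigma> k) * x $ k)) / real CARD('n)"
          using False B by (simp add: fI_def)
        also have "fR x $ i1 = real CARD('n) * x$i1 - (\<Sum>k\<in>UNIV-{i1}. real (\<sigma> k) * x$k)"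
          using i1a by (simp add: fR_def gR_def)
        finally show ?thesis using N0 True by simp
      next
        case False2: False
        then show ?thesis using False by (simp add: fI_def fR_def gR_def)
      qed
    qed
  qed
qed

lemma fR_toreal: "fR (to_real k) = lp (gI k) (k$a)"
proof -
  have g: "gR (to_real k) = to_real (gI k)"
    by (simp add: vec_eq_iff gR_def gI_def to_real_def)
  show ?thesis
    by (simp add: vec_eq_iff fR_def g lp_def hh_def) (simp add: to_real_def algebra_simps)
qed

lemma phi_gI: "phi (gI k) = int CARD('n) * k$i1"
proof -
  have "phi (gI k) = int (\<sigma> i1) * gI k $ i1 + (\<Sum>i\<in>UNIV-{i1}. int (\<sigma> i) * gI k $ i)"
    unfolding phi_def by (simp add: sum.remove)
  also have "(\<Sum>i\<in>UNIV-{i1}. int (\<sigma> i) * gI k $ i) = (\<Sum>i\<in>UNIV-{i1}. int (\<sigma> i) * k $ i)"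
    by (intro sum.cong refl) (simp add: gI_def)
  finally show ?thesis by (simp add: s_i1 gI_def)
qed

lemma lp_cong: "(\<And>i. i \<noteq> a \<Longrightarrow> m$i = m'$i) \<Longrightarrow> lp m r = lp m' r"
proof -
  assume h: "\<And>i. i \<noteq> a \<Longrightarrow> m$i = m'$i"
  have "hh m = hh m'" unfolding hh_def by (intro sum.cong refl) (metis cc_a h mult_zero_left)
  then show ?thesis using h by (simp add: vec_eq_iff lp_def)
qed

lemma LL_range: "LL = {fR (to_real k) | k. True}"
proof
  show "{fR (to_real k) | k. True} \<subseteq> LL"
    unfolding LL_def fR_toreal using phi_gI by auto
next
  show "LL \<subseteq> {fR (to_real k) | k. True}"
  proof
    fix l assume "l \<in> LL"
    then obtain m r where l: "l = lp m r" "int CARD('n) dvd phi m" unfolding LL_def by blast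
    define k :: "int^'n" where "k = (\<chi> i. if i = a then r else if i = i1 then phi m div int CARD('n) else m$i)"
    have "gI k $ i = m $ i" if "i \<noteq> a" for i
    proof (cases "i = i1")
      case True
      have e1: "int CARD('n) * (phi m div int CARD('n)) = phi m" using l(2) by simp
      have e2: "(\<Sum>j\<in>UNIV-{i1}. int (\<sigma> j) * k$j) = (\<Sum>j\<in>UNIV-{i1}. int (\<sigma> j) * m$j)"
        by (intro sum.cong refl) (simp add: k_def sigma_a)
      have e3: "phi m = m$i1 + (\<Sum>j\<in>UNIV-{i1}. int (\<sigma> j) * m$j)"
        unfolding phi_def by (simp add: sum.remove[of UNIV i1] s_i1)
      show ?thesis using True i1a e1 e2 e3 by (simp add: gI_def k_def)
    next
      case False then show ?thesis using that by (simp add: gI_def k_def)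
    qed
    then have "lp (gI k) r = lp m r" by (rule lp_cong)
    moreover have "k$a = r" by (simp add: k_def)
    ultimately have "lp (gI k) (k$a) = lp m r" by simp
    then have "l = fR (to_real k)" using l(1) fR_toreal[of k] by simp
    then show "l \<in> {fR (to_real k) | k. True}" by blast
  qed
qed

lemma lattice_LL: "is_lattice LL"
  unfolding is_lattice_def
proof (intro exI conjI)
  have mw: "matrix fR *v x = fR x" for x using lin_fR by (simp add: matrix_works scalar_mult_eq_scaleR)
  have mwI: "matrix fI *v x = fI x" for x using lin_fI by (simp add: matrix_works scalar_mult_eq_scaleR)
  have "matrix fI ** matrix fR = mat 1"
    unfolding matrix_eq by (simp add: matrix_vector_mul_assoc[symmetric] mw mwI fI_fR)
  then show "invertible (matrix fR)" unfolding invertible_left_inverse by blast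
  show "LL = {matrix fR *v to_real k | k. True}" unfolding LL_range mw ..
qed

lemma nonreg: "non_regular D0 LL"
proof -
  define m' :: "int^'n" where "m' = axis i1 2 - axis i2 1"
  define c :: "int^'n" where "c = axis i1 1 + axis a 0"
  define c' :: "int^'n" where "c' = axis i2 1 + axis a 0"
  have cD: "c \<in> D0" unfolding memD c_def using i1a by blast
  have cD': "c' \<in> D0" unfolding memD c'_def using i2a by blast
  have "phi m' = 0" unfolding m'_def by (simp add: phi_diff phi_axis s_i1 s_i2)
  then have l'L: "lp m' 0 \<in> LL" unfolding LL_def by auto
  have "phi 0 = 0" by (simp add: phi_def)
  then have lL: "lp 0 0 \<in> LL" unfolding LL_def by force
  have hm: "hh m' = 1/2"
  proof -
    have "hh m' = 2 * cc i1 - cc i2" unfolding m'_def by (simp add: hh_diff hh_axis)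
    also have "\<dots> = 1/2" using i1a i2a n3 by (simp add: cc_def s_i1 s_i2 field_simps)
    finally show ?thesis .
  qed
  have h0: "hh 0 = 0" by (simp add: hh_def)
  have P: "to_real c + lp 0 0 = axis i1 1"
    unfolding vec_eq_iff using i1a by (simp add: c_def to_real_def lp_def h0 axis_def)
  have Q: "to_real c' + lp m' 0 = axis i1 2 + axis a (1/2)"
  proof -
    have mc: "m' $ j = (if j = i1 then 2 else 0) - (if j = i2 then 1 else 0)" for j
      by (simp add: m'_def axis_def)
    show ?thesis unfolding vec_eq_iff using i1a i2a i12 by (simp add: c'_def mc to_real_def lp_def hm axis_def)
  qed
  have ne: "lp 0 0 \<noteq> lp m' 0"
  proof
    assume "lp 0 0 = lp m' 0"
    then have "lp 0 0 $ a = lp m' 0 $ a" by simp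
    then show False by (simp add: lp_comp h0 hm)
  qed
  show ?thesis unfolding non_regular_def
    using lL l'L cD cD' ne affdim_pair[OF i1a] not_nb[OF i1a] unfolding P Q
    by (intro bexI[of _ "lp 0 0"] bexI[of _ "lp m' 0"] bexI[of _ c] bexI[of _ c']) (simp_all add: P Q)
qed

end

theorem theorem7:
  assumes "CARD('n::finite) > 1"
    and "\<not> (\<exists>k::nat. CARD('n) = 2 ^ k)"
  shows "\<exists>(D::(int^'n) set) (L::(real^'n) set).
           is_double_sphere D \<and> lattice_tiling (cluster D) L \<and> non_regular D L"
proof -
  have "CARD('n) \<noteq> 2" using assms(2) by (metis power_one_right)
  then have n3: "3 \<le> CARD('n)" using assms(1) by linarith
  obtain h :: "'n \<Rightarrow> nat" where h: "bij_betw h UNIV {0..<CARD('n)}"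
    using ex_bij_betw_finite_nat[of "UNIV :: 'n set"] by auto
  then have h': "bij_betw h UNIV {..<CARD('n)}" by (simp add: atLeast0LessThan)
  interpret dcl h using h' n3 by unfold_locales
  have "is_double_sphere D0" unfolding is_double_sphere_def
    by (intro exI[of _ 0] exI[of _ "axis a 1"]) (simp add: lee_dist_def sum_abs_axis)
  moreover have "lattice_tiling (cluster D0) LL"
    unfolding lattice_tiling_def using lattice_LL tiles_cover tiles_disjoint by blast
  ultimately show ?thesis using nonreg by blast
qed

end
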